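(* Assume (A4) holds, and let $R^*:=\sup_{n\ge1}\sup\{|\boldsymbol\theta|_\infty:\boldsymbol\theta\in\operatorname{argmin}^*\widehat{\mathcal R}_{\ell,n}\}$. Then for all $n\ge1$ and $\lambda>0$ the set of minimizers of $\widehat{\mathcal R}_{\ell,\lambda}$ over $\mathcal P_{\mathbf a,\infty}$ is nonempty, and \[\sup_{\lambda\ge0,\,n\ge1}\Big\{|\boldsymbol\theta|_\infty:\boldsymbol\theta\in\operatorname{argmin}^*\widehat{\mathcal R}_{\ell,\lambda}\Big\}\le R^*\cdot P(\mathbf a)^{1/p}.\]
   Context: Setting: $d\in\mathbb N$, $\mathcal X=[0,1]^d$, $\mathcal Y=\{-1,1\}$; $\rho$ is a probability distribution on $\mathcal X\times\mathcal Y$, $(X,Y)\sim\rho$, $(x_i,y_i)_{i\ge1}$ i.i.d. from $\rho$. Networks: $\sigma(t)=\max\{0,t\}$; architecture $\mathbf a=(a_0,\dots,a_L)$ with $a_0=d$, $a_L=1$, $P(\mathbf a)=\sum_{l=1}^L(a_la_{l-1}+a_l)$; parametrization $\boldsymbol\theta=((W_l,B_l))_{l=1}^L$, $W_l\in\mathbb R^{a_l\times a_{l-1}}$, $B_l\in\mathbb R^{a_l}$, viewed as a vector in $\mathbb R^{P(\mathbf a)}$ with norms $|\cdot|_\infty$ (max absolute entry) and $|\boldsymbol\theta|_p^p=$ sum of $p$-th powers of absolute entries; $\mathcal P_{\mathbf a,\infty}$ is the set of all parametrizations. Realization $f(x;\boldsymbol\theta)=\operatorname{clip}_1(T_L\circ\sigma\circ\cdots\circ\sigma\circ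 T_1(x))$, $T_l(z)=W_lz+B_l$, $\operatorname{clip}_1(t)=\max(-1,\min(1,t))$. Fix $0<p<\infty$. $\widehat{\mathcal R}_{\ell,\lambda}(\boldsymbol\theta)=\frac1n\sum_{i=1}^n(f(x_i;\boldsymbol\theta)-y_i)^2+\frac\lambda2|\boldsymbol\theta|_p^p$, $\widehat{\mathcal R}_{\ell,n}=\widehat{\mathcal R}_{\ell,0}$; $\mathcal R_\ell(\boldsymbol\theta)=\mathbb E[(f(X;\boldsymbol\theta)-Y)^2]$. For $\lambda\ge0$, $\operatorname{argmin}^*\widehat{\mathcal R}_{\ell,\lambda}$ is the set of minimizers of $|\boldsymbol\theta|_\infty$ among the minimizers of $\widehat{\mathcal R}_{\ell,\lambda}$ over $\mathcal P_{\mathbf a,\infty}$ (in particular $\operatorname{argmin}^*\widehat{\mathcal R}_{\ell,n}$ for $\lambda=0$). Assumption (A4): the argmins of $\mathcal R_\ell$ and $\widehat{\mathcal R}_{\ell,n}$ are nonempty, and almost surely over the i.i.d. draws, $\sup_{n\ge1}\sup\{|\boldsymbol\theta|_\infty:\boldsymbol\theta\in\operatorname{argmin}^*\widehat{\mathcal R}_{\ell,n}\}<\infty$. *)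

theory Defs
  imports "HOL-Probability.Probability"
begin

text \<open>Inputs x in [0,1]^d are encoded as functions nat => real vanishing outside {0..<d};
  labels are reals in {-1,1}. A sample point is a pair (x,y).\<close>

definition sample_space :: "nat \<Rightarrow> ((nat \<Rightarrow> real) \<times> real) set" where
  "sample_space d = {(x, y). (\<forall>i<d. 0 \<le> x i \<and> x i \<le> 1) \<and> (\<forall>i\<ge>d. x i = 0) \<and> y \<in> {-1, 1}}"

text \<open>Architecture a = (a_0,...,a_L) as a list of length L+1, L >= 1.\<close>

definition valid_arch :: "nat \<Rightarrow> nat list \<Rightarrow> bool" where
  "valid_arch d a \<longleftrightarrow> length a \<ge> 2 \<and> a ! 0 = d \<and> last a = 1 \<and> (\<forall>l<length a. 0 < a ! l)"

definition nparams :: "nat list \<Rightarrow> nat" where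
  "nparams a = (\<Sum>l<length a - 1. a ! (Suc l) * a ! l + a ! (Suc l))"

text \<open>A layer (W,B): W is the list of rows of the weight matrix, B the bias vector.\<close>

type_synonym layer = "real list list \<times> real list"
type_synonym param = "layer list"

definition is_param :: "nat list \<Rightarrow> param \<Rightarrow> bool" where
  "is_param a \<theta> \<longleftrightarrow> length \<theta> = length a - 1 \<and>
     (\<forall>l<length \<theta>. length (fst (\<theta> ! l)) = a ! Suc l \<and>
        (\<forall>row\<in>set (fst (\<theta> ! l)). length row = a ! l) \<and>
        length (snd (\<theta> ! l)) = a ! Suc l)"

definition Params :: "nat list \<Rightarrow> param set" where
  "Params a = {\<theta>. is_param a \<theta>}"

definition entries :: "param \<Rightarrow> real list" where
  "entries \<theta> = concat (map (\<lambda>(W, B). concat W @ B) \<theta>)"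

definition sup_norm :: "param \<Rightarrow> real" where
  "sup_norm \<theta> = Max (insert 0 (abs ` set (entries \<theta>)))"

definition pnorm_pow :: "real \<Rightarrow> param \<Rightarrow> real" where
  "pnorm_pow p \<theta> = sum_list (map (\<lambda>t. \<bar>t\<bar> powr p) (entries \<theta>))"

definition relu :: "real \<Rightarrow> real" where
  "relu t = max 0 t"

definition clip1 :: "real \<Rightarrow> real" where
  "clip1 t = max (-1) (min 1 t)"

definition affine :: "layer \<Rightarrow> real list \<Rightarrow> real list" where
  "affine l z = map2 (\<lambda>row b. sum_list (map2 (*) row z) + b) (fst l) (snd l)"

fun net_eval :: "param \<Rightarrow> real list \<Rightarrow> real list" where
  "net_eval [] z = z"
| "net_eval [l] z = affine l z"
| "net_eval (l # ls) z = net_eval ls (map relu (affine l z))"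

definition realization :: "nat \<Rightarrow> param \<Rightarrow> (nat \<Rightarrow> real) \<Rightarrow> real" where
  "realization d \<theta> x = clip1 (hd (net_eval \<theta> (map x [0..<d])))"

text \<open>Penalized empirical risk on the first n sample points S 1, ..., S n;
  lambda = 0 gives the plain empirical risk.\<close>

definition emp_risk :: "nat \<Rightarrow> real \<Rightarrow> (nat \<Rightarrow> (nat \<Rightarrow> real) \<times> real) \<Rightarrow> nat \<Rightarrow> real \<Rightarrow> param \<Rightarrow> real" where
  "emp_risk d p S n lam \<theta> =
     (1 / real n) * (\<Sum>i=1..n. (realization d \<theta> (fst (S i)) - snd (S i))\<^sup>2) + lam / 2 * pnorm_pow p \<theta>"

definition pop_risk :: "nat \<Rightarrow> ((nat \<Rightarrow> real) \<times> real) measure \<Rightarrow> param \<Rightarrow> real" where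
  "pop_risk d \<rho> \<theta> = (\<integral>z. (realization d \<theta> (fst z) - snd z)\<^sup>2 \<partial>\<rho>)"

definition argmin_on :: "'a set \<Rightarrow> ('a \<Rightarrow> real) \<Rightarrow> 'a set" where
  "argmin_on A g = {x \<in> A. \<forall>y\<in>A. g x \<le> g y}"

definition argmin_star :: "param set \<Rightarrow> (param \<Rightarrow> real) \<Rightarrow> param set" where
  "argmin_star A g = argmin_on (argmin_on A g) sup_norm"

definition Rstar :: "nat \<Rightarrow> nat list \<Rightarrow> real \<Rightarrow> (nat \<Rightarrow> (nat \<Rightarrow> real) \<times> real) \<Rightarrow> ereal" where
  "Rstar d a p S = Sup (ereal ` {sup_norm \<theta> | n \<theta>. n \<ge> 1 \<and> \<theta> \<in> argmin_star (Params a) (emp_risk d p S n 0)})"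

end

theory Submission
  imports Defs
begin

fun build :: "nat list \<Rightarrow> (nat \<Rightarrow> real) \<Rightarrow> param" where
  "build (a0 # a1 # rest) f =
     (map (\<lambda>j. map (\<lambda>k. f (j*a0+k)) [0..<a0]) [0..<a1], map (\<lambda>j. f (a1*a0+j)) [0..<a1])
     # build (a1 # rest) (\<lambda>i. f (i + (a1*a0+a1)))"
| "build _ f = []"

lemma concat_rows: "concat (map (\<lambda>j. map (\<lambda>k. g (j*m+k)) [0..<m]) [0..<n]) = map g [0..<n*m]"
proof (induction n)
  case 0 then show ?case by simp
next
  case (Suc n)
  have "[0..<Suc n * m] = [0..<n*m] @ [n*m..<n*m+m]"
    using upt_add_eq_append[of 0 "n*m" m] by (simp add: add.commute)
  moreover have "map g [n*m..<n*m+m] = map (\<lambda>k. g (n*m+k)) [0..<m]"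
    by (rule nth_equalityI) auto
  ultimately show ?case using Suc by simp
qed

lemma nparams_Cons: "nparams (a0 # a1 # rest) = a1*a0 + a1 + nparams (a1 # rest)"
proof -
  have "length (a0 # a1 # rest) - 1 = Suc (length rest)" by simp
  then show ?thesis unfolding nparams_def by (simp only: sum.lessThan_Suc_shift) simp
qed

lemma nparams_short: "length a < 2 \<Longrightarrow> nparams a = 0"
  unfolding nparams_def by simp

lemma entries_Cons: "entries (l # ls) = concat (fst l) @ snd l @ entries ls"
  unfolding entries_def by (cases l) simp

lemma entries_Nil: "entries [] = []" unfolding entries_def by simp

lemma entries_build: "entries (build a f) = map f [0..<nparams a]"
proof (induction a f rule: build.induct)
  case (1 a0 a1 rest f)
  define M where "M = nparams (a1 # rest)"
  have e1: "map f [a1*a0..<a1*a0+a1] = map (\<lambda>j. f (a1*a0+j)) [0..<a1]"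
    by (rule nth_equalityI) auto
  have e2: "map f [a1*a0+a1..<a1*a0+a1+M] = map (\<lambda>i. f (i + (a1*a0+a1))) [0..<M]"
    by (rule nth_equalityI) (auto simp: add.commute)
  have u1: "[0..<a1*a0+a1+M] = [0..<a1*a0+a1] @ [a1*a0+a1..<a1*a0+a1+M]"
    by (rule upt_add_eq_append) simp
  have u2: "[0..<a1*a0+a1] = [0..<a1*a0] @ [a1*a0..<a1*a0+a1]"
    by (rule upt_add_eq_append) simp
  have "entries (build (a0 # a1 # rest) f) =
     map f [0..<a1*a0] @ map (\<lambda>j. f (a1*a0+j)) [0..<a1] @ map (\<lambda>i. f (i + (a1*a0+a1))) [0..<M]"
    using 1 by (simp add: entries_Cons concat_rows M_def)
  also have "\<dots> = map f [0..<nparams (a0 # a1 # rest)]"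
    unfolding nparams_Cons M_def[symmetric] u1 u2 e1[symmetric] e2[symmetric] by simp
  finally show ?case .
qed (auto simp: entries_Nil nparams_short)

lemma is_param_Cons: "is_param (a0 # a1 # rest) (l # ls) \<longleftrightarrow>
   (length (fst l) = a1 \<and> (\<forall>row\<in>set (fst l). length row = a0) \<and> length (snd l) = a1) \<and> is_param (a1 # rest) ls"
proof -
  have *: "(\<forall>i<Suc n. P i) \<longleftrightarrow> P 0 \<and> (\<forall>i<n. P (Suc i))" for n and P :: "nat \<Rightarrow> bool"
    using less_Suc_eq_0_disj by auto
  show ?thesis unfolding is_param_def
    by (simp only: length_Cons * nth_Cons_0 nth_Cons_Suc) auto
qed

lemma is_param_build: "is_param a (build a f)"
proof (induction a f rule: build.induct)
  case (1 a0 a1 rest f)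
  then show ?case by (simp add: is_param_Cons)
qed (auto simp: is_param_def)

lemma length_concat_const: "(\<forall>x\<in>set xs. length x = c) \<Longrightarrow> length (concat xs) = length xs * c"
  by (induction xs) auto

lemma is_param_ConsE:
  assumes "is_param a (l # ls)"
  obtains a0 a1 rest where "a = a0 # a1 # rest"
proof -
  from assms have "length a = Suc (Suc (length ls))" unfolding is_param_def by auto
  then show ?thesis using that by (metis length_Suc_conv)
qed

lemma is_param_Nil: "is_param a [] \<Longrightarrow> is_param a \<theta> \<Longrightarrow> \<theta> = []"
  unfolding is_param_def by auto

lemma length_entries: "is_param a \<theta> \<Longrightarrow> length (entries \<theta>) = nparams a"
proof (induction \<theta> arbitrary: a)
  case Nil
  then have "length a < 2" unfolding is_param_def by auto
  then show ?case by (simp add: entries_Nil nparams_short)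
next
  case (Cons l ls)
  then obtain a0 a1 rest where a: "a = a0 # a1 # rest" by (auto elim: is_param_ConsE)
  with Cons.prems have P: "length (fst l) = a1" "\<forall>row\<in>set (fst l). length row = a0" "length (snd l) = a1"
     "is_param (a1 # rest) ls" by (auto simp: is_param_Cons)
  then show ?case using Cons.IH[OF P(4)] length_concat_const[OF P(2)]
    by (simp add: a entries_Cons nparams_Cons)
qed

lemma entries_inj: "is_param a \<theta> \<Longrightarrow> is_param a \<theta>' \<Longrightarrow> entries \<theta> = entries \<theta>' \<Longrightarrow> \<theta> = \<theta>'"
proof (induction \<theta> arbitrary: a \<theta>')
  case Nil
  then show ?case using is_param_Nil by metis
next
  case (Cons l ls)
  then obtain a0 a1 rest where a: "a = a0 # a1 # rest" by (auto elim: is_param_ConsE)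
  from Cons.prems have "length \<theta>' = Suc (length ls)" unfolding is_param_def by auto
  then obtain l' ls' where t': "\<theta>' = l' # ls'" by (metis length_Suc_conv)
  obtain W B where l: "l = (W, B)" by force
  obtain W' B' where l': "l' = (W', B')" by force
  from Cons.prems have P: "length W = a1" "\<forall>row\<in>set W. length row = a0" "length B = a1"
     "is_param (a1 # rest) ls" by (auto simp: is_param_Cons a l)
  from Cons.prems have P': "length W' = a1" "\<forall>row\<in>set W'. length row = a0" "length B' = a1"
     "is_param (a1 # rest) ls'" by (auto simp: is_param_Cons a l' t')
  have lc: "length (concat W) = length (concat W')"
    using length_concat_const[OF P(2)] length_concat_const[OF P'(2)] P(1) P'(1) by simp
  from Cons.prems(3) have "concat W @ B @ entries ls = concat W' @ B' @ entries ls'"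
    by (simp add: t' l l' entries_Cons)
  with lc P(3) P'(3) have e: "concat W = concat W'" "B = B'" "entries ls = entries ls'"
    by auto
  have "\<forall>(x, y) \<in> set (zip W W'). length x = length y"
    using P(2) P'(2) by (metis (mono_tags, lifting) case_prodI2 set_zip_leftD set_zip_rightD)
  with e(1) P(1) P'(1) have "W = W'" using concat_eq_concat_iff by metis
  moreover have "ls = ls'" using Cons.IH[OF P(4) P'(4) e(3)] .
  ultimately show ?case using e(2) by (simp add: t' l l')
qed

definition flat :: "nat list \<Rightarrow> param \<Rightarrow> nat \<Rightarrow> real" where
  "flat a \<theta> i = (if i < nparams a then entries \<theta> ! i else 0)"

lemma build_flat: "\<theta> \<in> Params a \<Longrightarrow> build a (flat a \<theta>) = \<theta>"
proof -
  assume "\<theta> \<in> Params a"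
  then have pa: "is_param a \<theta>" by (simp add: Params_def)
  have "entries (build a (flat a \<theta>)) = entries \<theta>"
    unfolding entries_build
    by (rule nth_equalityI) (auto simp: length_entries[OF pa] flat_def)
  then show ?thesis using entries_inj[OF is_param_build pa] by simp
qed

definition lay :: "nat \<Rightarrow> nat \<Rightarrow> (nat \<Rightarrow> real) \<Rightarrow> layer" where
  "lay a0 a1 h = (map (\<lambda>j. map (\<lambda>k. h (j*a0+k)) [0..<a0]) [0..<a1], map (\<lambda>j. h (a1*a0+j)) [0..<a1])"

lemma build_Cons: "build (a0 # a1 # rest) f = lay a0 a1 f # build (a1 # rest) (\<lambda>i. f (i + (a1*a0+a1)))"
  by (simp add: lay_def)

lemma sum_list_map2: "length z = m \<Longrightarrow> sum_list (map2 (*) (map \<phi> [0..<m]) z) = (\<Sum>k<m. \<phi> k * z ! k)"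
proof -
  assume "length z = m"
  then have "map2 (*) (map \<phi> [0..<m]) z = map (\<lambda>k. \<phi> k * z ! k) [0..<m]"
    by (intro nth_equalityI) auto
  then show ?thesis by (simp add: interv_sum_list_conv_sum_set_nat atLeast0LessThan)
qed

lemma affine_lay_length: "length (affine (lay a0 a1 h) z) = a1"
  by (simp add: affine_def lay_def)

lemma affine_lay_nth: "length z = a0 \<Longrightarrow> j < a1 \<Longrightarrow>
   affine (lay a0 a1 h) z ! j = (\<Sum>k<a0. h (j*a0+k) * z ! k) + h (a1*a0+j)"
  by (simp add: affine_def lay_def sum_list_map2)

definition contl :: "((nat \<Rightarrow> real) \<Rightarrow> real list) \<Rightarrow> nat \<Rightarrow> bool" where
  "contl F m \<longleftrightarrow> (\<forall>f. length (F f) = m) \<and> (\<forall>j<m. continuous_on UNIV (\<lambda>f. F f ! j))"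

lemma contl_affine:
  assumes "contl Z a0" "\<And>i. continuous_on UNIV (\<lambda>f. g f i)"
  shows "contl (\<lambda>f. affine (lay a0 a1 (g f)) (Z f)) a1"
  unfolding contl_def
proof (intro conjI allI impI)
  fix f show "length (affine (lay a0 a1 (g f)) (Z f)) = a1" by (rule affine_lay_length)
next
  fix j assume j: "j < a1"
  have eq: "(\<lambda>f. affine (lay a0 a1 (g f)) (Z f) ! j) = (\<lambda>f. (\<Sum>k<a0. g f (j*a0+k) * Z f ! k) + g f (a1*a0+j))"
    using assms(1) j unfolding contl_def by (auto simp: affine_lay_nth)
  show "continuous_on UNIV (\<lambda>f. affine (lay a0 a1 (g f)) (Z f) ! j)"
    unfolding eq using assms unfolding contl_def by (intro continuous_intros) auto
qed

lemma contl_relu: "contl Z m \<Longrightarrow> contl (\<lambda>f. map relu (Z f)) m"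
  unfolding contl_def relu_def by (auto intro!: continuous_intros)

lemma net_cont:
  "length a \<ge> 2 \<Longrightarrow> contl Z (hd a) \<Longrightarrow> (\<And>i. continuous_on UNIV (\<lambda>f. g f i)) \<Longrightarrow>
   contl (\<lambda>f. net_eval (build a (g f)) (Z f)) (last a)"
proof (induction a arbitrary: Z g)
  case Nil then show ?case by simp
next
  case (Cons a0 a')
  then obtain a1 rest where a': "a' = a1 # rest" by (cases a') auto
  show ?case
  proof (cases rest)
    case Nil
    have "build [a0, a1] h = [lay a0 a1 h]" for h by (simp add: lay_def)
    then show ?thesis using contl_affine[of Z a0 g a1] Cons.prems
      by (simp add: a' Nil)
  next
    case (Cons r rs)
    have c1: "contl (\<lambda>f. map relu (affine (lay a0 a1 (g f)) (Z f))) a1"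
      using contl_relu contl_affine Cons.prems by simp
    have c2: "continuous_on UNIV (\<lambda>f. g f (i + (a1*a0+a1)))" for i using Cons.prems(3) .
    have "contl (\<lambda>f. net_eval (build a' ((\<lambda>f i. g f (i + (a1*a0+a1))) f)) (map relu (affine (lay a0 a1 (g f)) (Z f)))) (last a')"
      using Cons.IH[of "\<lambda>f. map relu (affine (lay a0 a1 (g f)) (Z f))" "\<lambda>f i. g f (i + (a1*a0+a1))", OF _ _ c2] c1
      by (simp add: a' \<open>rest = r # rs\<close>)
    moreover have "net_eval (build (a0 # a') (g f)) (Z f) =
       net_eval (build a' ((\<lambda>f i. g f (i + (a1*a0+a1))) f)) (map relu (affine (lay a0 a1 (g f)) (Z f)))" for f
    proof -
      obtain l ls where "build a' (\<lambda>i. g f (i + (a1*a0+a1))) = l # ls"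
        by (simp add: a' \<open>rest = r # rs\<close>)
      then show ?thesis by (simp only: a' build_Cons) simp
    qed
    ultimately show ?thesis by (simp add: a')
  qed
qed

lemma realization_cont:
  assumes "valid_arch d a"
  shows "continuous_on UNIV (\<lambda>f. realization d (build a f) x)"
proof -
  from assms have la: "length a \<ge> 2" "hd a = d" "last a = 1"
    unfolding valid_arch_def by (metis hd_conv_nth list.size(3) not_numeral_le_zero)+
  have "contl (\<lambda>f. map x [0..<d]) (hd a)" using la unfolding contl_def by auto
  from net_cont[OF la(1) this, of "\<lambda>f. f"] la(3)
  have c: "contl (\<lambda>f. net_eval (build a f) (map x [0..<d])) 1" by simp
  then have "continuous_on UNIV (\<lambda>f. clip1 (net_eval (build a f) (map x [0..<d]) ! 0))"
    unfolding contl_def clip1_def by (auto intro!: continuous_intros)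
  moreover have "hd (net_eval (build a f) (map x [0..<d])) = net_eval (build a f) (map x [0..<d]) ! 0" for f
    using c unfolding contl_def by (metis hd_conv_nth list.size(3) zero_neq_one)
  ultimately show ?thesis unfolding realization_def by simp
qed

lemma pnorm_build: "pnorm_pow p (build a f) = (\<Sum>i<nparams a. \<bar>f i\<bar> powr p)"
  by (simp add: pnorm_pow_def entries_build interv_sum_list_conv_sum_set_nat atLeast0LessThan comp_def)

lemma sup_build: "sup_norm (build a f) = Max (insert 0 ((\<lambda>i. \<bar>f i\<bar>) ` {..<nparams a}))"
  by (simp add: sup_norm_def entries_build image_image atLeast0LessThan)

lemma max_cont: "continuous_on UNIV (\<lambda>f::nat\<Rightarrow>real. Max (insert 0 ((\<lambda>i. \<bar>f i\<bar>) ` {..<N})))"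
proof (induction N)
  case 0 then show ?case by simp
next
  case (Suc N)
  have "Max (insert 0 ((\<lambda>i. \<bar>f i\<bar>) ` {..<Suc N})) = max \<bar>f N\<bar> (Max (insert 0 ((\<lambda>i. \<bar>f i\<bar>) ` {..<N})))"
    for f :: "nat \<Rightarrow> real"
  proof -
    have "insert 0 ((\<lambda>i. \<bar>f i\<bar>) ` {..<Suc N}) = insert \<bar>f N\<bar> (insert 0 ((\<lambda>i. \<bar>f i\<bar>) ` {..<N}))"
      by (auto simp: lessThan_Suc)
    then show ?thesis by (simp add: Max_insert)
  qed
  then show ?case using Suc by (simp only:) (intro continuous_intros continuous_on_product_coordinates)
qed

lemma sup_cont: "continuous_on UNIV (\<lambda>f. sup_norm (build a f))"
  unfolding sup_build by (rule max_cont)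

lemma emp_cont:
  assumes "valid_arch d a" "p > 0"
  shows "continuous_on UNIV (\<lambda>f. emp_risk d p S n lam (build a f))"
  unfolding emp_risk_def pnorm_build
  using realization_cont[OF assms(1)] assms(2)
  by (intro continuous_intros continuous_on_powr') auto

definition pbox :: "nat \<Rightarrow> real \<Rightarrow> (nat \<Rightarrow> real) set" where
  "pbox N R = Pi\<^sub>E UNIV (\<lambda>i. if i < N then {-R..R} else {0})"

lemma pbox_compact: "compact (pbox N R)"
proof -
  have "compactin (product_topology (\<lambda>_. euclidean) UNIV) (Pi\<^sub>E UNIV (\<lambda>i::nat. if i < N then {-R..R::real} else {0}))"
    by (subst compactin_PiE) auto
  then show ?thesis by (simp add: euclidean_product_topology pbox_def)
qed

lemma mem_pbox: "f \<in> pbox N R \<longleftrightarrow> (\<forall>i. (i < N \<longrightarrow> \<bar>f i\<bar> \<le> R) \<and> (i \<ge> N \<longrightarrow> f i = 0))"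
proof -
  have *: "f i \<in> (if i < N then {-R..R} else {0}) \<longleftrightarrow> (i < N \<longrightarrow> \<bar>f i\<bar> \<le> R) \<and> (i \<ge> N \<longrightarrow> f i = 0)" for i
    by (cases "i < N") (auto simp: abs_le_iff)
  have "f \<in> pbox N R \<longleftrightarrow> (\<forall>i. f i \<in> (if i < N then {-R..R} else {0}))"
    unfolding pbox_def PiE_UNIV_domain Pi_iff by blast
  then show ?thesis using * by blast
qed

lemma pbox_mono: "R \<le> R' \<Longrightarrow> pbox N R \<subseteq> pbox N R'"
  unfolding subset_iff mem_pbox by (meson order_trans)

lemma zero_pbox: "R \<ge> 0 \<Longrightarrow> (\<lambda>_. 0) \<in> pbox N R"
  unfolding mem_pbox by auto

lemma sup_norm_ge: "t \<in> set (entries \<theta>) \<Longrightarrow> \<bar>t\<bar> \<le> sup_norm \<theta>"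
  unfolding sup_norm_def by (intro Max_ge) auto

lemma sup_norm_nonneg: "sup_norm \<theta> \<ge> 0"
  unfolding sup_norm_def by (intro Max_ge) auto

lemma flat_pbox: "\<theta> \<in> Params a \<Longrightarrow> flat a \<theta> \<in> pbox (nparams a) (sup_norm \<theta>)"
  unfolding mem_pbox flat_def
  using length_entries[of a \<theta>] sup_norm_ge[of _ \<theta>] by (auto simp: Params_def)

lemma pnorm_nonneg: "pnorm_pow p \<theta> \<ge> 0"
  unfolding pnorm_pow_def by (rule sum_list_nonneg) auto

lemma pnorm_ge_sup: "sup_norm \<theta> powr p \<le> pnorm_pow p \<theta>"
proof -
  have "sup_norm \<theta> \<in> insert 0 (abs ` set (entries \<theta>))"
    unfolding sup_norm_def by (rule Max_in) auto
  then show ?thesis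
  proof
    assume "sup_norm \<theta> = 0" then show ?thesis using pnorm_nonneg by simp
  next
    assume "sup_norm \<theta> \<in> abs ` set (entries \<theta>)"
    then obtain t where t: "t \<in> set (entries \<theta>)" "sup_norm \<theta> = \<bar>t\<bar>" by auto
    show ?thesis unfolding pnorm_pow_def t(2)
      by (rule member_le_sum_list) (use t(1) in auto)
  qed
qed

lemma pnorm_le_sup: "p > 0 \<Longrightarrow> pnorm_pow p \<theta> \<le> real (length (entries \<theta>)) * sup_norm \<theta> powr p"
proof -
  assume p: "p > 0"
  have "pnorm_pow p \<theta> \<le> sum_list (map (\<lambda>t. sup_norm \<theta> powr p) (entries \<theta>))"
    unfolding pnorm_pow_def
    by (rule sum_list_mono) (auto intro!: powr_mono2 sup_norm_ge less_imp_le[OF p])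
  also have "\<dots> = real (length (entries \<theta>)) * sup_norm \<theta> powr p"
    by (simp add: sum_list_triv)
  finally show ?thesis .
qed

lemma build_Params: "build a f \<in> Params a"
  by (simp add: Params_def is_param_build)

lemma pen_exists:
  assumes cont: "continuous_on UNIV (\<lambda>f. G (build a f))"
    and lam: "lam > 0" and p: "p > 0"
    and low: "\<And>\<theta>. G \<theta> \<ge> lam / 2 * pnorm_pow p \<theta>"
  shows "argmin_on (Params a) G \<noteq> {}"
proof -
  define N where "N = nparams a"
  define v0 where "v0 = G (build a (\<lambda>_. 0))"
  define R where "R = (2 * \<bar>v0\<bar> / lam + 1) powr (1 / p)"
  have R0: "R \<ge> 0" unfolding R_def by simp
  have "R powr p = 2 * \<bar>v0\<bar> / lam + 1"
    unfolding R_def using p lam by (simp add: powr_powr)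
  then have Rv: "lam / 2 * R powr p > v0" using lam by (simp add: field_simps)
  obtain fs where fs: "fs \<in> pbox N R" "\<forall>f\<in>pbox N R. G (build a fs) \<le> G (build a f)"
    using continuous_attains_inf[OF pbox_compact, of N R "\<lambda>f. G (build a f)"]
      zero_pbox[OF R0] continuous_on_subset[OF cont] by blast
  have "build a fs \<in> argmin_on (Params a) G"
    unfolding argmin_on_def
  proof (intro CollectI conjI ballI build_Params)
    fix \<theta> assume th: "\<theta> \<in> Params a"
    show "G (build a fs) \<le> G \<theta>"
    proof (cases "sup_norm \<theta> \<le> R")
      case True
      then have "flat a \<theta> \<in> pbox N R" using flat_pbox[OF th] pbox_mono N_def by blast
      then show ?thesis using fs(2) build_flat[OF th] by metis
    next
      case False
      then have "R powr p < sup_norm \<theta> powr p" using R0 p by (intro powr_less_mono2) auto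
      also have "\<dots> \<le> pnorm_pow p \<theta>" by (rule pnorm_ge_sup)
      finally have "lam / 2 * R powr p \<le> lam / 2 * pnorm_pow p \<theta>" using lam by simp
      then have "v0 < G \<theta>" using Rv low[of \<theta>] by linarith
      moreover have "G (build a fs) \<le> v0" unfolding v0_def using fs(2) zero_pbox[OF R0] by blast
      ultimately show ?thesis by simp
    qed
  qed
  then show ?thesis by blast
qed

lemma star_exists:
  assumes cont: "continuous_on UNIV (\<lambda>f. G (build a f))"
    and ne: "argmin_on (Params a) G \<noteq> {}"
  shows "argmin_star (Params a) G \<noteq> {}"
proof -
  define N where "N = nparams a"
  obtain \<theta>0 where t0: "\<theta>0 \<in> argmin_on (Params a) G" using ne by blast
  then have t0P: "\<theta>0 \<in> Params a" and t0m: "\<forall>\<theta>\<in>Params a. G \<theta>0 \<le> G \<theta>"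
    unfolding argmin_on_def by auto
  define R where "R = sup_norm \<theta>0"
  define C where "C = pbox N R \<inter> {f. G (build a f) = G \<theta>0}"
  have "closed {f. G (build a f) = G \<theta>0}"
    by (rule closed_Collect_eq) (auto intro: cont)
  then have Cc: "compact C" unfolding C_def by (intro compact_Int_closed pbox_compact)
  have f0C: "flat a \<theta>0 \<in> C"
    unfolding C_def using flat_pbox[OF t0P] build_flat[OF t0P] by (simp add: N_def R_def)
  obtain fs where fs: "fs \<in> C" "\<forall>f\<in>C. sup_norm (build a fs) \<le> sup_norm (build a f)"
    using continuous_attains_inf[OF Cc, of "\<lambda>f. sup_norm (build a f)"] f0C
      continuous_on_subset[OF sup_cont] by blast
  have fsA: "build a fs \<in> argmin_on (Params a) G"
    using fs(1) t0m unfolding C_def argmin_on_def by (auto intro: build_Params)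
  have "build a fs \<in> argmin_star (Params a) G"
    unfolding argmin_star_def argmin_on_def[of "argmin_on _ _"]
  proof (intro CollectI conjI ballI fsA)
    fix \<theta> assume th: "\<theta> \<in> argmin_on (Params a) G"
    then have thP: "\<theta> \<in> Params a" and thmin: "G \<theta> = G \<theta>0"
      using t0 unfolding argmin_on_def by (auto intro: antisym)
    show "sup_norm (build a fs) \<le> sup_norm \<theta>"
    proof (cases "sup_norm \<theta> \<le> R")
      case True
      then have "flat a \<theta> \<in> C" unfolding C_def
        using flat_pbox[OF thP] pbox_mono N_def build_flat[OF thP] thmin by auto
      then show ?thesis using fs(2) build_flat[OF thP] by metis
    next
      case False
      then show ?thesis using fs(2) f0C build_flat[OF t0P] unfolding R_def by force
    qed
  qed
  then show ?thesis by blast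
qed

lemma emp_split: "emp_risk d p S n lam \<theta> = emp_risk d p S n 0 \<theta> + lam / 2 * pnorm_pow p \<theta>"
  unfolding emp_risk_def by simp

lemma emp0_nonneg: "emp_risk d p S n 0 \<theta> \<ge> 0"
  unfolding emp_risk_def by (simp add: sum_nonneg)

lemma ereal_le_mult1: "0 \<le> x \<Longrightarrow> 1 \<le> c \<Longrightarrow> x \<le> x * ereal c"
  by (cases x) (auto intro: mult_left_mono[of 1 c, simplified])

lemma main_det:
  assumes va: "valid_arch d a" and p: "0 < p"
    and emp: "\<forall>n\<ge>1. argmin_on (Params a) (emp_risk d p S n 0) \<noteq> {}"
  shows "(\<forall>n\<ge>1. \<forall>lam>0. argmin_on (Params a) (emp_risk d p S n lam) \<noteq> {}) \<and>
     Sup (ereal ` {sup_norm \<theta> | lam n \<theta>. lam \<ge> 0 \<and> n \<ge> 1 \<and>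
                    \<theta> \<in> argmin_star (Params a) (emp_risk d p S n lam)})
       \<le> Rstar d a p S * ereal (real (nparams a) powr (1 / p))"
proof (intro conjI allI impI)
  fix n :: nat and lam :: real assume "n \<ge> 1" "lam > 0"
  show "argmin_on (Params a) (emp_risk d p S n lam) \<noteq> {}"
    by (rule pen_exists[OF emp_cont[OF va p] \<open>lam > 0\<close> p])
       (subst emp_split, use emp0_nonneg in simp)
next
  define N where "N = nparams a"
  define c where "c = real N powr (1 / p)"
  from va have L: "Suc (Suc 0) \<le> length a" and pos: "\<forall>l<length a. 0 < a ! l"
    unfolding valid_arch_def by auto
  from L obtain a0 a' where a0: "a = a0 # a'" "Suc 0 \<le> length a'" by (auto simp: Suc_le_length_iff)
  from a0(2) obtain a1 rest where a1: "a' = a1 # rest" by (auto simp: Suc_le_length_iff)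
  have a: "a = a0 # a1 # rest" "a1 > 0"
    using a0 a1 pos[rule_format, of 1] by auto
  have N1: "N \<ge> 1" unfolding N_def a(1) nparams_Cons using a(2) by simp
  have c1: "c \<ge> 1" unfolding c_def using N1 p by (intro ge_one_powr_ge_zero) auto
  have cp: "c powr p = real N" unfolding c_def using N1 p by (simp add: powr_powr)
  show "Sup (ereal ` {sup_norm \<theta> | lam n \<theta>. lam \<ge> 0 \<and> n \<ge> 1 \<and>
                    \<theta> \<in> argmin_star (Params a) (emp_risk d p S n lam)})
       \<le> Rstar d a p S * ereal (real (nparams a) powr (1 / p))"
  proof (rule Sup_least)
    fix x assume "x \<in> ereal ` {sup_norm \<theta> | lam n \<theta>. lam \<ge> 0 \<and> n \<ge> 1 \<and>
                    \<theta> \<in> argmin_star (Params a) (emp_risk d p S n lam)}"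
    then obtain lam n \<theta> where x: "x = ereal (sup_norm \<theta>)" and lam: "lam \<ge> 0" and n: "n \<ge> 1"
      and th: "\<theta> \<in> argmin_star (Params a) (emp_risk d p S n lam)" by auto
    obtain \<theta>s where ths: "\<theta>s \<in> argmin_star (Params a) (emp_risk d p S n 0)"
      using star_exists[OF emp_cont[OF va p]] emp n by blast
    have Rs: "ereal (sup_norm \<theta>s) \<le> Rstar d a p S"
      unfolding Rstar_def using ths n by (intro Sup_upper) blast
    show "x \<le> Rstar d a p S * ereal (real (nparams a) powr (1 / p))"
    proof (cases "lam = 0")
      case True
      have "x \<le> Rstar d a p S"
        unfolding Rstar_def x using th n True by (intro Sup_upper) blast
      also have "\<dots> \<le> Rstar d a p S * ereal c"
      proof (rule ereal_le_mult1[OF _ c1])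
        have "ereal 0 \<le> ereal (sup_norm \<theta>s)" using sup_norm_nonneg[of \<theta>s] by simp
        then show "0 \<le> Rstar d a p S" using Rs zero_ereal_def order_trans by metis
      qed
      finally show ?thesis by (simp add: c_def N_def)
    next
      case False
      with lam have lp: "lam > 0" by simp
      have thP: "\<theta> \<in> Params a" and thmin: "\<forall>\<theta>'\<in>Params a. emp_risk d p S n lam \<theta> \<le> emp_risk d p S n lam \<theta>'"
        using th unfolding argmin_star_def argmin_on_def by auto
      have thsP: "\<theta>s \<in> Params a" and thsmin: "\<forall>\<theta>'\<in>Params a. emp_risk d p S n 0 \<theta>s \<le> emp_risk d p S n 0 \<theta>'"
        using ths unfolding argmin_star_def argmin_on_def by auto
      have "emp_risk d p S n 0 \<theta> + lam / 2 * pnorm_pow p \<theta> \<le> emp_risk d p S n 0 \<theta>s + lam / 2 * pnorm_pow p \<theta>s"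
        using thmin thsP unfolding emp_split[of d p S n lam] by blast
      moreover have "emp_risk d p S n 0 \<theta>s \<le> emp_risk d p S n 0 \<theta>" using thsmin thP by blast
      ultimately have "lam / 2 * pnorm_pow p \<theta> \<le> lam / 2 * pnorm_pow p \<theta>s" by linarith
      then have "pnorm_pow p \<theta> \<le> pnorm_pow p \<theta>s" using lp by simp
      also have "\<dots> \<le> real N * sup_norm \<theta>s powr p"
        using pnorm_le_sup[OF p, of \<theta>s] length_entries[of a \<theta>s] thsP by (simp add: Params_def N_def)
      also have "\<dots> = (c * sup_norm \<theta>s) powr p"
        using c1 sup_norm_nonneg[of \<theta>s] by (simp add: powr_mult cp)
      finally have le: "sup_norm \<theta> powr p \<le> (c * sup_norm \<theta>s) powr p"
        using pnorm_ge_sup[of \<theta> p] by linarith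
      have "sup_norm \<theta> \<le> c * sup_norm \<theta>s"
      proof (rule ccontr)
        assume "\<not> ?thesis"
        then have "(c * sup_norm \<theta>s) powr p < sup_norm \<theta> powr p"
          using p c1 sup_norm_nonneg[of \<theta>s] by (intro powr_less_mono2) auto
        with le show False by simp
      qed
      then have "x \<le> ereal (sup_norm \<theta>s) * ereal c" unfolding x by (simp add: mult.commute)
      also have "\<dots> \<le> Rstar d a p S * ereal c"
        using Rs c1 by (intro ereal_mult_right_mono) auto
      finally show ?thesis by (simp add: c_def N_def)
    qed
  qed
qed

theorem lemma2:
  fixes M :: "'w measure" and \<rho> :: "((nat \<Rightarrow> real) \<times> real) measure"
    and Z :: "nat \<Rightarrow> 'w \<Rightarrow> (nat \<Rightarrow> real) \<times> real"
    and d :: nat and a :: "nat list" and p :: real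
  assumes "prob_space M" and "prob_space \<rho>" and "space \<rho> = sample_space d"
    and "d \<ge> 1" and "valid_arch d a" and "0 < p"
    and "prob_space.indep_vars M (\<lambda>_. \<rho>) Z {1..}"
    and "\<forall>i\<ge>1. distr M \<rho> (Z i) = \<rho>"
    and A4_pop: "argmin_on (Params a) (pop_risk d \<rho>) \<noteq> {}"
    and A4_emp: "AE \<omega> in M. \<forall>n\<ge>1. argmin_on (Params a) (emp_risk d p (\<lambda>i. Z i \<omega>) n 0) \<noteq> {}"
    and A4_bdd: "AE \<omega> in M. Rstar d a p (\<lambda>i. Z i \<omega>) < \<infinity>"
  shows "AE \<omega> in M.
     (\<forall>n\<ge>1. \<forall>lam>0. argmin_on (Params a) (emp_risk d p (\<lambda>i. Z i \<omega>) n lam) \<noteq> {}) \<and>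
     Sup (ereal ` {sup_norm \<theta> | lam n \<theta>. lam \<ge> 0 \<and> n \<ge> 1 \<and>
                    \<theta> \<in> argmin_star (Params a) (emp_risk d p (\<lambda>i. Z i \<omega>) n lam)})
       \<le> Rstar d a p (\<lambda>i. Z i \<omega>) * ereal (real (nparams a) powr (1 / p))"
  by (rule eventually_mono[OF A4_emp]) (rule main_det[OF assms(5,6)])

end
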